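(* Let $K$ be a locally compact Hausdorff space and $X$ a strictly convex real Banach space. Let $t_0\in K$ and $x_0\in S_X$. Then $A(t_0,x_0)=\{f\in S_{C_0(K,X)}: f(t_0)=x_0\}$ is a maximal norm-closed proper face of $B_{C_0(K,X)}$, equivalently, a maximal convex subset of $S_{C_0(K,X)}$.
   Context: All Banach spaces are real. $C_0(K,X)$ is the Banach space of continuous functions $K\to X$ vanishing at infinity, with sup norm. A Banach space is strictly convex if every point of its unit sphere is an extreme point of its closed unit ball. *)

theory Defs
  imports "HOL-Analysis.Analysis"
begin

definition strictly_convex_space :: "'x::real_normed_vector itself \<Rightarrow> bool" where
  "strictly_convex_space _ \<longleftrightarrow>
     (\<forall>x::'x. norm x = 1 \<longrightarrow> x extreme_point_of cball 0 1)"

text \<open>C_0(K,X): bounded continuous functions vanishing at infinity, as a subset of the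
  Banach space of bounded continuous functions with the sup norm.\<close>
definition C0 :: "('k::topological_space \<Rightarrow>\<^sub>C 'x::real_normed_vector) set" where
  "C0 = {f. \<forall>e>0. compact {t. e \<le> norm (apply_bcontfun f t)}}"

definition C0_ball :: "('k::topological_space \<Rightarrow>\<^sub>C 'x::real_normed_vector) set" where
  "C0_ball = C0 \<inter> cball 0 1"

definition C0_sphere :: "('k::topological_space \<Rightarrow>\<^sub>C 'x::real_normed_vector) set" where
  "C0_sphere = C0 \<inter> sphere 0 1"

definition closed_proper_face :: "('k::topological_space \<Rightarrow>\<^sub>C 'x::real_normed_vector) set \<Rightarrow> bool" where
  "closed_proper_face F \<longleftrightarrow>
     F face_of C0_ball \<and> closedin (top_of_set C0) F \<and> F \<noteq> {} \<and> F \<noteq> C0_ball"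

definition maximal_closed_proper_face :: "('k::topological_space \<Rightarrow>\<^sub>C 'x::real_normed_vector) set \<Rightarrow> bool" where
  "maximal_closed_proper_face F \<longleftrightarrow>
     closed_proper_face F \<and> (\<forall>G. closed_proper_face G \<and> F \<subseteq> G \<longrightarrow> G = F)"

definition maximal_convex_subset_of_sphere :: "('k::topological_space \<Rightarrow>\<^sub>C 'x::real_normed_vector) set \<Rightarrow> bool" where
  "maximal_convex_subset_of_sphere F \<longleftrightarrow>
     convex F \<and> F \<subseteq> C0_sphere \<and> (\<forall>G. convex G \<and> G \<subseteq> C0_sphere \<and> F \<subseteq> G \<longrightarrow> G = F)"

end

theory Submission
  imports Defs
begin

lemma Hausdorff_euclidean_t2: "Hausdorff_space (euclidean :: 'a::t2_space topology)"
  unfolding Hausdorff_space_def disjnt_def using hausdorff by fastforce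

lemma bump:
  fixes t0 :: "'k::t2_space"
  assumes lc: "locally_compact_space (euclidean::'k topology)" and W: "open W" "t0 \<in> W"
  obtains \<phi> :: "'k \<Rightarrow> real" where "continuous_on UNIV \<phi>" "\<And>t. 0 \<le> \<phi> t" "\<And>t. \<phi> t \<le> 1"
    "\<phi> t0 = 1" "\<And>t. t \<notin> W \<Longrightarrow> \<phi> t = 0" "\<And>e. e > 0 \<Longrightarrow> compact {t. e \<le> \<phi> t}"
proof -
  obtain U Kc where U: "openin euclidean U" "compactin euclidean Kc" "t0 \<in> U" "U \<subseteq> Kc"
  proof -
    have "\<exists>U Kc. openin euclidean U \<and> compactin euclidean Kc \<and> t0 \<in> U \<and> U \<subseteq> Kc"
      using lc unfolding locally_compact_space_def topspace_euclidean by (rule bspec) (rule UNIV_I)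
    then show ?thesis by (elim exE conjE) (rule that)
  qed
  have "regular_space (euclidean::'k topology)"
    by (rule locally_compact_Hausdorff_imp_regular_space[OF lc Hausdorff_euclidean_t2])
  then have cr: "completely_regular_space (euclidean::'k topology)"
    using completely_regular_eq_regular_space[OF lc] by simp
  have "closedin euclidean (- (U \<inter> W))" using U W by auto
  then obtain f :: "'k \<Rightarrow> real" where f: "continuous_map euclidean (top_of_set {0..1}) f"
     "f t0 = 0" "f ` (- (U \<inter> W)) \<subseteq> {1}"
  proof -
    have "t0 \<in> topspace euclidean - (- (U \<inter> W))" using U W by auto
    then show ?thesis
      using cr[unfolded completely_regular_space_def, rule_format, of "- (U \<inter> W)" t0] \<open>closedin euclidean (- (U \<inter> W))\<close> that
      by blast
  qed
  have fc: "continuous_on UNIV f" and fr: "\<And>t. f t \<in> {0..1}"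
    using f(1) by (auto simp: continuous_map_in_subtopology)
  show ?thesis
  proof
    show "continuous_on UNIV (\<lambda>t. 1 - f t)" using fc by (intro continuous_intros)
    show "0 \<le> 1 - f t" "1 - f t \<le> 1" for t using fr[of t] by auto
    show "1 - f t0 = 1" using f by simp
    show "t \<notin> W \<Longrightarrow> 1 - f t = 0" for t using f(3) by auto
    show "compact {t. e \<le> 1 - f t}" if "e > 0" for e
    proof -
      have "{t. e \<le> 1 - f t} = Kc \<inter> {t. e \<le> 1 - f t}"
      proof (intro set_eqI iffI)
        fix t assume "t \<in> {t. e \<le> 1 - f t}"
        then have "f t \<noteq> 1" using that by auto
        then have "t \<in> U" using f(3) by blast
        then show "t \<in> Kc \<inter> {t. e \<le> 1 - f t}" using U(4) \<open>t \<in> {t. e \<le> 1 - f t}\<close> by blast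
      qed blast
      moreover have "closed {t. e \<le> 1 - f t}"
        using fc by (intro closed_Collect_le continuous_intros) auto
      ultimately show ?thesis using U(2) compact_Int_closed[of Kc] unfolding compactin_euclidean_iff by metis
    qed
  qed
qed

lemma closed_norm_ge: "closed {t. e \<le> norm (apply_bcontfun f t)}"
  by (intro closed_Collect_le continuous_intros) auto

lemma C0_zero: "0 \<in> C0"
  unfolding C0_def by auto

lemma C0_add:
  assumes "f \<in> C0" "g \<in> C0"
  shows "f + g \<in> C0"
  unfolding C0_def
proof (intro CollectI allI impI)
  fix e :: real assume e: "e > 0"
  have "{t. e \<le> norm (apply_bcontfun (f + g) t)} =
     ({t. e/2 \<le> norm (apply_bcontfun f t)} \<union> {t. e/2 \<le> norm (apply_bcontfun g t)}) \<inter> {t. e \<le> norm (apply_bcontfun (f + g) t)}"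
  proof (intro set_eqI iffI)
    fix t assume "t \<in> {t. e \<le> norm (apply_bcontfun (f + g) t)}"
    then have "e \<le> norm (apply_bcontfun f t) + norm (apply_bcontfun g t)"
      using norm_triangle_ineq[of "apply_bcontfun f t" "apply_bcontfun g t"] by simp
    then show "t \<in> ({t. e/2 \<le> norm (apply_bcontfun f t)} \<union> {t. e/2 \<le> norm (apply_bcontfun g t)}) \<inter> {t. e \<le> norm (apply_bcontfun (f + g) t)}"
      using \<open>t \<in> _\<close> by auto
  qed blast
  moreover have "compact ({t. e/2 \<le> norm (apply_bcontfun f t)} \<union> {t. e/2 \<le> norm (apply_bcontfun g t)})"
  proof (intro compact_Un)
    have "\<forall>e>0. compact {t. e \<le> norm (apply_bcontfun f t)}" "\<forall>e>0. compact {t. e \<le> norm (apply_bcontfun g t)}"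
      using assms by (simp_all add: C0_def)
    then show "compact {t. e/2 \<le> norm (apply_bcontfun f t)}" "compact {t. e/2 \<le> norm (apply_bcontfun g t)}"
      using e by (meson half_gt_zero)+
  qed
  ultimately show "compact {t. e \<le> norm (apply_bcontfun (f + g) t)}"
    using compact_Int_closed closed_norm_ge by metis
qed

lemma C0_scale:
  assumes "f \<in> C0"
  shows "c *\<^sub>R f \<in> C0"
proof (cases "c = 0")
  case True then show ?thesis using C0_zero by simp
next
  case False
  show ?thesis unfolding C0_def
  proof (intro CollectI allI impI)
    fix e :: real assume e: "e > 0"
    have "{t. e \<le> norm (apply_bcontfun (c *\<^sub>R f) t)} = {t. e / \<bar>c\<bar> \<le> norm (apply_bcontfun f t)}"
      using False by (auto simp: field_simps)
    then show "compact {t. e \<le> norm (apply_bcontfun (c *\<^sub>R f) t)}"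
      using assms e False unfolding C0_def by auto
  qed
qed

lemma C0_comb:
  assumes "f \<in> C0" "g \<in> C0"
  shows "a *\<^sub>R f + b *\<^sub>R g \<in> C0"
  using assms C0_add C0_scale by blast

lemma eval_cont: "continuous_on UNIV (\<lambda>f::('a::topological_space \<Rightarrow>\<^sub>C 'b::real_normed_vector). apply_bcontfun f t)"
proof -
  have "bounded_linear (\<lambda>f::('a \<Rightarrow>\<^sub>C 'b). apply_bcontfun f t)"
    by (rule bounded_linear_intro[where K=1]) (auto simp: norm_bounded)
  then show ?thesis by (simp add: linear_continuous_on)
qed

lemma bump_fun:
  fixes \<phi> :: "'k::topological_space \<Rightarrow> real" and x0 :: "'x::real_normed_vector"
  assumes "continuous_on UNIV \<phi>" "\<And>t. 0 \<le> \<phi> t" "\<And>t. \<phi> t \<le> 1" "\<phi> t0 = 1"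
    "\<And>e. e > 0 \<Longrightarrow> compact {t. e \<le> \<phi> t}" "norm x0 = 1"
  shows "apply_bcontfun (Bcontfun (\<lambda>t. \<phi> t *\<^sub>R x0)) = (\<lambda>t. \<phi> t *\<^sub>R x0)"
    and "Bcontfun (\<lambda>t. \<phi> t *\<^sub>R x0) \<in> C0_sphere"
proof -
  have "(\<lambda>t. \<phi> t *\<^sub>R x0) \<in> bcontfun"
    by (rule bcontfun_normI[where b=1]) (use assms in \<open>auto intro!: continuous_intros\<close>)
  then show ap: "apply_bcontfun (Bcontfun (\<lambda>t. \<phi> t *\<^sub>R x0)) = (\<lambda>t. \<phi> t *\<^sub>R x0)"
    by (simp add: Bcontfun_inverse)
  let ?f = "Bcontfun (\<lambda>t. \<phi> t *\<^sub>R x0)"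
  have "?f \<in> C0" unfolding C0_def
  proof (intro CollectI allI impI)
    fix e :: real assume "e > 0"
    have "{t. e \<le> norm (apply_bcontfun ?f t)} = {t. e \<le> \<phi> t}"
      using ap assms(2,6) by auto
    then show "compact {t. e \<le> norm (apply_bcontfun ?f t)}" using assms(5) \<open>e > 0\<close> by simp
  qed
  moreover have "norm ?f \<le> 1"
    by (rule norm_bound) (use ap assms in auto)
  moreover have "1 \<le> norm ?f"
    using norm_bounded[of ?f t0] ap assms by simp
  ultimately show "?f \<in> C0_sphere" unfolding C0_sphere_def by auto
qed

lemma max_conv:
  fixes t0 :: "'k::t2_space" and x0 :: "'x::real_normed_vector"
  assumes lc: "locally_compact_space (euclidean :: 'k topology)"
    and sc: "strictly_convex_space TYPE('x)" and x0: "norm x0 = 1"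
    and G: "convex G" "G \<subseteq> C0_sphere" "{f \<in> (C0_sphere :: ('k \<Rightarrow>\<^sub>C 'x) set). apply_bcontfun f t0 = x0} \<subseteq> G"
    and g: "g \<in> G"
  shows "apply_bcontfun g t0 = x0"
proof (rule ccontr)
  assume ne: "apply_bcontfun g t0 \<noteq> x0"
  define y where "y = apply_bcontfun g t0"
  have gs: "g \<in> C0_sphere" using G g by auto
  then have gn1: "norm g = 1" unfolding C0_sphere_def by simp
  have gn: "\<And>t. norm (apply_bcontfun g t) \<le> 1" using norm_bounded[of g] gn1 by metis
  have yn: "norm y \<le> 1" using gn y_def by simp
  define m where "m = (1/2) *\<^sub>R (x0 + y)"
  have mle1: "norm m \<le> 1"
  proof -
    have "norm m \<le> (1/2) * (norm x0 + norm y)"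
      unfolding m_def using norm_triangle_ineq[of x0 y] by simp
    then show ?thesis using x0 yn by simp
  qed
  have mlt: "norm m < 1"
  proof (rule ccontr)
    assume "\<not> norm m < 1"
    then have "norm m = 1" using mle1 by simp
    then have ext: "m extreme_point_of cball 0 1" using sc unfolding strictly_convex_space_def by blast
    have "m \<in> open_segment x0 y" using ne midpoint_in_open_segment[of x0 y] unfolding m_def y_def
      by (simp add: midpoint_def)
    moreover have "x0 \<in> cball 0 1" "y \<in> cball 0 1" using x0 yn by auto
    ultimately show False using ext unfolding extreme_point_of_def by blast
  qed
  define \<delta> where "\<delta> = (1 - norm m) / 2"
  have d0: "\<delta> > 0" and d1: "\<delta> \<le> 1/2" using mlt by (auto simp: \<delta>_def)
  define W where "W = {t. norm ((1/2) *\<^sub>R (x0 + apply_bcontfun g t)) < 1 - \<delta>}"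
  have "open W" unfolding W_def
    by (intro open_Collect_less continuous_intros) auto
  moreover have "t0 \<in> W"
  proof -
    have "norm m < 1 - \<delta>" using mlt unfolding \<delta>_def by (simp add: field_simps)
    then show ?thesis unfolding W_def m_def y_def by simp
  qed
  ultimately obtain \<phi> :: "'k \<Rightarrow> real" where ph: "continuous_on UNIV \<phi>" "\<And>t. 0 \<le> \<phi> t" "\<And>t. \<phi> t \<le> 1"
    "\<phi> t0 = 1" "\<And>t. t \<notin> W \<Longrightarrow> \<phi> t = 0" "\<And>e. e > 0 \<Longrightarrow> compact {t. e \<le> \<phi> t}"
    using bump[OF lc] by metis
  define f where "f = Bcontfun (\<lambda>t. \<phi> t *\<^sub>R x0)"
  have fap: "apply_bcontfun f = (\<lambda>t. \<phi> t *\<^sub>R x0)" and fs: "f \<in> C0_sphere"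
    using bump_fun[OF ph(1,2,3,4,6) x0] unfolding f_def by auto
  have "f \<in> G" using G(3) fs fap ph(4) by auto
  then have "(1/2) *\<^sub>R f + (1/2) *\<^sub>R g \<in> G" using G(1) g by (intro convexD) auto
  then have hn: "norm ((1/2) *\<^sub>R f + (1/2) *\<^sub>R g) = 1" using G(2) unfolding C0_sphere_def by auto
  have "norm ((1/2) *\<^sub>R f + (1/2) *\<^sub>R g) \<le> 1 - \<delta>"
  proof (rule norm_bound)
    fix t
    have eq: "apply_bcontfun ((1/2) *\<^sub>R f + (1/2) *\<^sub>R g) t = (1/2) *\<^sub>R (\<phi> t *\<^sub>R x0) + (1/2) *\<^sub>R apply_bcontfun g t"
      using fap by simp
    show "norm (apply_bcontfun ((1/2) *\<^sub>R f + (1/2) *\<^sub>R g) t) \<le> 1 - \<delta>"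
    proof (cases "t \<in> W")
      case True
      have "(1/2) *\<^sub>R (\<phi> t *\<^sub>R x0) + (1/2) *\<^sub>R apply_bcontfun g t =
          \<phi> t *\<^sub>R ((1/2) *\<^sub>R (x0 + apply_bcontfun g t)) + (1 - \<phi> t) *\<^sub>R ((1/2) *\<^sub>R apply_bcontfun g t)"
        apply (simp add: algebra_simps)
        apply (subst scaleR_add_left[symmetric])
        apply (simp add: field_simps)
        done
      also have "norm \<dots> \<le> \<phi> t * norm ((1/2) *\<^sub>R (x0 + apply_bcontfun g t)) + (1 - \<phi> t) * norm ((1/2) *\<^sub>R apply_bcontfun g t)"
      proof -
        let ?A = "(1/2) *\<^sub>R (x0 + apply_bcontfun g t)" and ?B = "(1/2) *\<^sub>R apply_bcontfun g t"
        have "norm (\<phi> t *\<^sub>R ?A + (1 - \<phi> t) *\<^sub>R ?B) \<le> norm (\<phi> t *\<^sub>R ?A) + norm ((1 - \<phi> t) *\<^sub>R ?B)"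
          by (rule norm_triangle_ineq)
        also have "\<dots> = \<phi> t * norm ?A + (1 - \<phi> t) * norm ?B"
          using ph(2,3)[of t] by (simp only: norm_scaleR abs_of_nonneg)
        finally show ?thesis .
      qed
      also have "\<dots> \<le> \<phi> t * (1 - \<delta>) + (1 - \<phi> t) * (1 - \<delta>)"
      proof (intro add_mono mult_left_mono)
        show "norm ((1/2) *\<^sub>R (x0 + apply_bcontfun g t)) \<le> 1 - \<delta>" using True W_def by simp
        show "norm ((1/2) *\<^sub>R apply_bcontfun g t) \<le> 1 - \<delta>" using gn[of t] d1 by simp
      qed (use ph(2,3)[of t] in auto)
      also have "\<dots> = 1 - \<delta>" by algebra
      finally show ?thesis using eq by simp
    next
      case False
      then show ?thesis using eq ph(5)[OF False] gn[of t] d1 by simp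
    qed
  qed
  then show False using hn d0 by simp
qed

lemma seg_aux:
  fixes h u :: "'a::real_vector"
  assumes "\<epsilon> > 0" "u \<noteq> h"
  shows "h \<in> open_segment u ((1 + \<epsilon>) *\<^sub>R h - \<epsilon> *\<^sub>R u)"
proof -
  define \<theta> where "\<theta> = 1 / (1 + \<epsilon>)"
  have t1: "\<theta> * (1 + \<epsilon>) = 1" using assms by (simp add: \<theta>_def)
  have t2: "1 - \<theta> = \<theta> * \<epsilon>" using assms by (simp add: \<theta>_def field_simps)
  have "(1 - \<theta>) *\<^sub>R u + \<theta> *\<^sub>R ((1 + \<epsilon>) *\<^sub>R h - \<epsilon> *\<^sub>R u) = (\<theta> * (1 + \<epsilon>)) *\<^sub>R h"
    unfolding t2 by (simp add: algebra_simps)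
  then have eq: "h = (1 - \<theta>) *\<^sub>R u + \<theta> *\<^sub>R ((1 + \<epsilon>) *\<^sub>R h - \<epsilon> *\<^sub>R u)" using t1 by simp
  have "(1 + \<epsilon>) *\<^sub>R h - \<epsilon> *\<^sub>R u - u = (1 + \<epsilon>) *\<^sub>R (h - u)" by (simp add: algebra_simps)
  then have ne: "u \<noteq> (1 + \<epsilon>) *\<^sub>R h - \<epsilon> *\<^sub>R u" using assms by auto
  have "0 < \<theta>" "\<theta> < 1" using assms by (auto simp: \<theta>_def)
  then show ?thesis using eq ne unfolding in_segment by blast
qed

theorem lemma2p11:
  fixes t0 :: "'k::t2_space" and x0 :: "'x::banach"
  assumes "locally_compact_space (euclidean :: 'k topology)"
    and "strictly_convex_space TYPE('x)"
    and "norm x0 = 1"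
  defines "A \<equiv> {f \<in> (C0_sphere :: ('k \<Rightarrow>\<^sub>C 'x) set). apply_bcontfun f t0 = x0}"
  shows "maximal_closed_proper_face A \<and> maximal_convex_subset_of_sphere A"
proof -
  note lc = assms(1) and sc = assms(2) and x0 = assms(3)
  have Asub: "A \<subseteq> C0_sphere" unfolding A_def by auto
  have convA: "convex A"
    unfolding convex_def
  proof (intro ballI allI impI)
    fix f g and u v :: real assume f: "f \<in> A" and g: "g \<in> A" and uv: "0 \<le> u" "0 \<le> v" "u + v = 1"
    have fC: "f \<in> C0" "norm f = 1" "apply_bcontfun f t0 = x0" using f unfolding A_def C0_sphere_def by auto
    have gC: "g \<in> C0" "norm g = 1" "apply_bcontfun g t0 = x0" using g unfolding A_def C0_sphere_def by auto
    have v: "apply_bcontfun (u *\<^sub>R f + v *\<^sub>R g) t0 = x0"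
      using fC gC uv by (simp add: scaleR_add_left[symmetric])
    have "norm (u *\<^sub>R f + v *\<^sub>R g) \<le> norm (u *\<^sub>R f) + norm (v *\<^sub>R g)" by (rule norm_triangle_ineq)
    also have "\<dots> = 1" using fC gC uv by simp
    finally have "norm (u *\<^sub>R f + v *\<^sub>R g) \<le> 1" .
    moreover have "1 \<le> norm (u *\<^sub>R f + v *\<^sub>R g)" using norm_bounded[of "u *\<^sub>R f + v *\<^sub>R g" t0] v x0 by simp
    ultimately show "u *\<^sub>R f + v *\<^sub>R g \<in> A"
      unfolding A_def C0_sphere_def using v C0_comb[OF fC(1) gC(1)] by auto
  qed
  have maxc: "G = A" if "convex G" "G \<subseteq> C0_sphere" "A \<subseteq> G" for G
  proof
    show "G \<subseteq> A"
    proof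
      fix g assume "g \<in> G"
      then have "apply_bcontfun g t0 = x0"
        using max_conv[OF lc sc x0 that(1,2)] that(3) \<open>g \<in> G\<close> unfolding A_def by blast
      then show "g \<in> A" using \<open>g \<in> G\<close> that(2) unfolding A_def by auto
    qed
  qed (use that in auto)
  have mcs: "maximal_convex_subset_of_sphere A"
    unfolding maximal_convex_subset_of_sphere_def using convA Asub maxc by blast
  have Ane: "A \<noteq> {}"
  proof -
    obtain \<phi> :: "'k \<Rightarrow> real" where ph: "continuous_on UNIV \<phi>" "\<And>t. 0 \<le> \<phi> t" "\<And>t. \<phi> t \<le> 1"
      "\<phi> t0 = 1" "\<And>t. t \<notin> UNIV \<Longrightarrow> \<phi> t = 0" "\<And>e. e > 0 \<Longrightarrow> compact {t. e \<le> \<phi> t}"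
      using bump[OF lc open_UNIV UNIV_I] by metis
    have "apply_bcontfun (Bcontfun (\<lambda>t. \<phi> t *\<^sub>R x0)) = (\<lambda>t. \<phi> t *\<^sub>R x0)"
      "Bcontfun (\<lambda>t. \<phi> t *\<^sub>R x0) \<in> C0_sphere"
      using bump_fun[OF ph(1,2,3,4,6) x0] by auto
    then have "Bcontfun (\<lambda>t. \<phi> t *\<^sub>R x0) \<in> A" unfolding A_def using ph(4) by auto
    then show ?thesis by auto
  qed
  have face: "A face_of C0_ball"
    unfolding face_of_def
  proof (intro conjI ballI impI)
    show "A \<subseteq> C0_ball" using Asub unfolding C0_sphere_def C0_ball_def by auto
    show "convex A" by (rule convA)
    fix a b x assume a: "a \<in> C0_ball" and b: "b \<in> C0_ball" and x: "x \<in> A" and xs: "x \<in> open_segment a b"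
    obtain u where u: "0 < u" "u < 1" "x = (1 - u) *\<^sub>R a + u *\<^sub>R b" using xs unfolding in_segment by blast
    have an: "norm (apply_bcontfun a t0) \<le> 1" using a norm_bounded[of a t0] unfolding C0_ball_def by auto
    have bn: "norm (apply_bcontfun b t0) \<le> 1" using b norm_bounded[of b t0] unfolding C0_ball_def by auto
    have xv: "x0 = (1 - u) *\<^sub>R apply_bcontfun a t0 + u *\<^sub>R apply_bcontfun b t0"
      using x u(3) unfolding A_def by auto
    have ab: "apply_bcontfun a t0 = apply_bcontfun b t0"
    proof (rule ccontr)
      assume "apply_bcontfun a t0 \<noteq> apply_bcontfun b t0"
      then have "x0 \<in> open_segment (apply_bcontfun a t0) (apply_bcontfun b t0)"
        using u xv unfolding in_segment by blast
      moreover have "x0 extreme_point_of cball 0 1" using sc x0 unfolding strictly_convex_space_def by blast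
      ultimately show False using an bn unfolding extreme_point_of_def by auto
    qed
    then have "x0 = apply_bcontfun a t0" using xv by (simp add: scaleR_add_left[symmetric])
    then have at0: "apply_bcontfun a t0 = x0" "apply_bcontfun b t0 = x0" using ab by auto
    have "norm a = 1" using norm_bounded[of a t0] at0 x0 a unfolding C0_ball_def by auto
    moreover have "norm b = 1" using norm_bounded[of b t0] at0 x0 b unfolding C0_ball_def by auto
    ultimately show "a \<in> A" "b \<in> A" using a b at0 unfolding A_def C0_sphere_def C0_ball_def by auto
  qed
  have clA: "closedin (top_of_set C0) A"
  proof -
    have "A = C0 \<inter> (sphere 0 1 \<inter> {f. apply_bcontfun f t0 = x0})"
      unfolding A_def C0_sphere_def by auto
    moreover have "closed (sphere (0::('k \<Rightarrow>\<^sub>C 'x)) 1 \<inter> {f. apply_bcontfun f t0 = x0})"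
    proof (intro closed_Int closed_Collect_eq eval_cont continuous_on_const)
      show "closed (sphere (0::('k \<Rightarrow>\<^sub>C 'x)) 1)" unfolding sphere_def
        by (intro closed_Collect_eq continuous_intros)
    qed
    ultimately show ?thesis by (simp add: closedin_closed_Int)
  qed
  have AneB: "A \<noteq> C0_ball"
  proof -
    have "0 \<in> C0_ball" using C0_zero unfolding C0_ball_def by auto
    moreover have "0 \<notin> A" unfolding A_def C0_sphere_def by auto
    ultimately show ?thesis by auto
  qed
  have cpf: "closed_proper_face A" unfolding closed_proper_face_def using face clA Ane AneB by blast
  have "G = A" if G: "closed_proper_face G" "A \<subseteq> G" for G
  proof -
    have Gf: "G face_of C0_ball" and GB: "G \<noteq> C0_ball" using G unfolding closed_proper_face_def by auto
    have GS: "G \<subseteq> C0_sphere"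
    proof
      fix h :: "'k \<Rightarrow>\<^sub>C 'x" assume h: "h \<in> G"
      have hB: "h \<in> C0_ball" using Gf h face_of_imp_subset by blast
      show "h \<in> C0_sphere"
      proof (rule ccontr)
        assume "h \<notin> C0_sphere"
        then have hn: "norm h < 1" using hB unfolding C0_ball_def C0_sphere_def by auto
        define \<epsilon> where "\<epsilon> = (1 - norm h) / 2"
        have e0: "\<epsilon> > 0" using hn by (simp add: \<epsilon>_def)
        have "C0_ball \<subseteq> G"
        proof
          fix u :: "'k \<Rightarrow>\<^sub>C 'x" assume u: "u \<in> C0_ball"
          show "u \<in> G"
          proof (cases "u = h")
            case True then show ?thesis using h by simp
          next
            case False
            let ?v = "(1 + \<epsilon>) *\<^sub>R h - \<epsilon> *\<^sub>R u"
            have seg: "h \<in> open_segment u ?v" by (rule seg_aux[OF e0 False])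
            have "?v = (1 + \<epsilon>) *\<^sub>R h + (- \<epsilon>) *\<^sub>R u" by simp
            then have vC: "?v \<in> C0" using C0_comb[of h u "1 + \<epsilon>" "- \<epsilon>"] hB u unfolding C0_ball_def by auto
            have "norm ?v \<le> norm ((1 + \<epsilon>) *\<^sub>R h) + norm (\<epsilon> *\<^sub>R u)" by (rule norm_triangle_ineq4)
            also have "\<dots> = (1 + \<epsilon>) * norm h + \<epsilon> * norm u" using e0 by simp
            also have "\<dots> \<le> (1 + \<epsilon>) * norm h + \<epsilon> * 1"
              using u e0 unfolding C0_ball_def by (intro add_left_mono mult_left_mono) auto
            also have "\<dots> \<le> 1"
            proof -
              have "0 \<le> (norm h - 1) * (norm h - 1)" by simp
              then show ?thesis unfolding \<epsilon>_def by (simp add: field_simps algebra_simps)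
            qed
            finally have "?v \<in> C0_ball" using vC unfolding C0_ball_def by auto
            then show "u \<in> G" using Gf h seg u unfolding face_of_def by blast
          qed
        qed
        then show False using GB Gf face_of_imp_subset by blast
      qed
    qed
    show "G = A" using maxc[OF face_of_imp_convex[OF Gf] GS G(2)] .
  qed
  then have "maximal_closed_proper_face A" unfolding maximal_closed_proper_face_def using cpf by blast
  then show ?thesis using mcs by blast
qed

end
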